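(* Let $R$ be a ring, $n$ a positive integer, and $I\subseteq J$ proper ideals of $R$. If $I$ is a weakly $n$-absorbing ideal of $R$ and $J/I$ is a weakly $n$-absorbing ideal of $R/I$, then $J$ is a weakly $n$-absorbing ideal of $R$.
   Context: All rings are commutative with $1\neq0$. A proper ideal $I$ of $R$ is weakly $n$-absorbing if whenever $0\neq a_1\cdots a_{n+1}\in I$ with $a_1,\dots,a_{n+1}\in R$, there are $n$ of the $a_i$'s whose product is in $I$. *)

theory Defs
  imports "HOL-Algebra.Algebra"
begin

definition weakly_n_absorbing ::
  "('a, 'b) ring_scheme \<Rightarrow> nat \<Rightarrow> 'a set \<Rightarrow> bool" where
  "weakly_n_absorbing R n I \<longleftrightarrow>
     ideal I R \<and> I \<noteq> carrier R \<and>
     (\<forall>a :: nat \<Rightarrow> 'a. (\<forall>i\<le>n. a i \<in> carrier R) \<longrightarrow>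
        finprod R a {..n} \<noteq> \<zero>\<^bsub>R\<^esub> \<longrightarrow>
        finprod R a {..n} \<in> I \<longrightarrow>
        (\<exists>j\<le>n. finprod R a ({..n} - {j}) \<in> I))"

definition quot_ideal :: "('a, 'b) ring_scheme \<Rightarrow> 'a set \<Rightarrow> 'a set \<Rightarrow> 'a set set" where
  "quot_ideal R J I = (\<lambda>x. I +>\<^bsub>R\<^esub> x) ` J"

end

theory Submission
  imports Defs
begin

theorem mainTheorem14:
  fixes R :: "('a, 'b) ring_scheme" and n :: nat and I J :: "'a set"
  assumes "cring R" and "\<one>\<^bsub>R\<^esub> \<noteq> \<zero>\<^bsub>R\<^esub>"
    and "n \<ge> 1"
    and "ideal I R" and "ideal J R" and "I \<subseteq> J"
    and "I \<noteq> carrier R" and "J \<noteq> carrier R"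
    and "weakly_n_absorbing R n I"
    and "weakly_n_absorbing (R Quot I) n (quot_ideal R J I)"
  shows "weakly_n_absorbing R n J"
proof -
  interpret cring R by fact
  interpret I: ideal I R by fact
  interpret J: ideal J R by fact
  interpret h: ring_hom_cring R "R Quot I" "(+>\<^bsub>R\<^esub>) I"
    using I.rcos_ring_hom_cring assms(1) by blast
  have self: "x \<in> I +>\<^bsub>R\<^esub> x" if "x \<in> carrier R" for x
    using that by (metis I.a_rcos_self) 
  have key: "x \<in> J" if "x \<in> carrier R" "y \<in> J" "I +>\<^bsub>R\<^esub> x = I +>\<^bsub>R\<^esub> y" for x y
  proof -
    have "x \<in> I +>\<^bsub>R\<^esub> y" using self[OF that(1)] that(3) by simp
    then obtain i where "i \<in> I" "x = i \<oplus>\<^bsub>R\<^esub> y" unfolding a_r_coset_def r_coset_def by auto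
    thus ?thesis using assms(6) that(2) J.a_closed by (metis subsetD)
  qed
  show ?thesis unfolding weakly_n_absorbing_def
  proof (intro conjI allI impI)
    show "ideal J R" "J \<noteq> carrier R" by fact+
    fix a :: "nat \<Rightarrow> 'a"
    assume ac: "\<forall>i\<le>n. a i \<in> carrier R" and nz: "finprod R a {..n} \<noteq> \<zero>\<^bsub>R\<^esub>"
      and inJ: "finprod R a {..n} \<in> J"
    show "\<exists>j\<le>n. finprod R a ({..n} - {j}) \<in> J"
    proof (cases "finprod R a {..n} \<in> I")
      case True
      then obtain j where "j \<le> n" "finprod R a ({..n} - {j}) \<in> I"
        using assms(9) ac nz unfolding weakly_n_absorbing_def by blast
      thus ?thesis using assms(6) by blast
    next
      case False
      let ?b = "\<lambda>i. I +>\<^bsub>R\<^esub> a i"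
      have Pi1: "a \<in> {..n} \<rightarrow> carrier R" using ac by auto
      have Pi2: "\<And>j. a \<in> {..n} - {j} \<rightarrow> carrier R" using ac by auto
      have e1: "I +>\<^bsub>R\<^esub> finprod R a {..n} = finprod (R Quot I) ?b {..n}"
        by (rule h.hom_finprod[OF Pi1, unfolded comp_def])
      have e2: "\<And>j. I +>\<^bsub>R\<^esub> finprod R a ({..n} - {j}) = finprod (R Quot I) ?b ({..n} - {j})"
        by (rule h.hom_finprod[OF Pi2, unfolded comp_def])
      have bc: "\<forall>i\<le>n. ?b i \<in> carrier (R Quot I)" using ac h.hom_closed by blast
      have pc: "finprod R a {..n} \<in> carrier R" using Pi1 by (rule finprod_closed)
      have nz2: "finprod (R Quot I) ?b {..n} \<noteq> \<zero>\<^bsub>R Quot I\<^esub>"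
      proof
        assume "finprod (R Quot I) ?b {..n} = \<zero>\<^bsub>R Quot I\<^esub>"
        moreover have "\<zero>\<^bsub>R Quot I\<^esub> = I" by (simp only: FactRing_def ring.simps)
        ultimately have "I +>\<^bsub>R\<^esub> finprod R a {..n} = I" using e1 by (simp only:)
        thus False using self[OF pc] False by blast
      qed
      have in2: "finprod (R Quot I) ?b {..n} \<in> quot_ideal R J I"
        unfolding quot_ideal_def e1[symmetric] using inJ by (rule imageI)
      obtain j where j: "j \<le> n" "finprod (R Quot I) ?b ({..n} - {j}) \<in> quot_ideal R J I"
        proof -
        have W: "\<forall>b :: nat \<Rightarrow> 'a set. (\<forall>i\<le>n. b i \<in> carrier (R Quot I)) \<longrightarrow>
          finprod (R Quot I) b {..n} \<noteq> \<zero>\<^bsub>R Quot I\<^esub> \<longrightarrow>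
          finprod (R Quot I) b {..n} \<in> quot_ideal R J I \<longrightarrow>
          (\<exists>j\<le>n. finprod (R Quot I) b ({..n} - {j}) \<in> quot_ideal R J I)"
          using assms(10) unfolding weakly_n_absorbing_def by (elim conjE)
        have "\<exists>j\<le>n. finprod (R Quot I) ?b ({..n} - {j}) \<in> quot_ideal R J I"
          using spec[OF W, of ?b] bc nz2 in2 by (elim impE)
        thus ?thesis using that by blast
      qed
      then obtain y where y: "y \<in> J" "I +>\<^bsub>R\<^esub> finprod R a ({..n} - {j}) = I +>\<^bsub>R\<^esub> y"
        unfolding quot_ideal_def e2[symmetric] by blast
      have "finprod R a ({..n} - {j}) \<in> carrier R" using Pi2 by (rule finprod_closed)
      thus ?thesis using key y j(1) by blast
    qed
  qed
qed

end
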